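(* Consider the network model and the NSB algorithm described in the context, with no packet arrivals after time 0. Consider any frame $k'$, consisting of time-slots $p=3k'$, $p+1$, $p+2$. If $\Delta(p)\ge 2$, then under NSB the maximum node queue length at the end of the frame (i.e., after the transmissions of slot $p+2$) is at most $\Delta(p)-2$.
   Context: Network model. $G=(V,E)$ is a finite undirected graph with $n=|V|$ nodes; $L(i)$ denotes the set of links incident to node $i$. Time is slotted, $k=0,1,2,\dots$. $Q_l(k)$ is the number of packets waiting at link $l$ in time-slot $k$, and the node queue length (workload) is $Q_i(k)=\sum_{l\in L(i)}Q_l(k)$; $\Delta(k)=\max_{i\in V}Q_i(k)$. A schedule in a slot is a matching of $G$ (links pairwise sharing no endpoint); only links with $Q_l(k)>0$ may be scheduled; each scheduled link transmits exactly one packet, which leaves the system. NSB algorithm. Frame $k'$ consists of slots $3k',3k'+1,3k'+2$. Let $R_i(k)=1$ if node $i$ is an endpoint of a link scheduled in slot $k$, else $0$ (with $R_i(k)=0$ for $k<0$). Define $U_i(k)=R_i(k-1)R_i(k-2)$ if $k=3k'+2$ for some integer $k'$, and $U_i(k)=R_i(k-1)$ otherwise. Node $i$ is heavy in slot $k$ if $Q_i(k)\ge\frac{n-1}{n}\Delta(k)$. In each slot $k$, NSB sets $w_i(k)=Q_i(k)(2-U_i(k))$ if $i$ is heavy and $w_i(k)=Q_i(k)$ otherwise, excludes links with $Q_l(k)=0$, and schedules a matching $M$ of the remaining links maximizing $\sum_{i:\,M\cap L(i)\ne\emptyset}w_i(k)$ (ties broken arbitrarily). *)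

theory Defs
  imports Complex_Main
begin

definition simple_graph :: "'v set \<Rightarrow> 'v set set \<Rightarrow> bool" where
  "simple_graph V E \<longleftrightarrow> finite V \<and>
     (\<forall>l\<in>E. \<exists>a b. a \<noteq> b \<and> a \<in> V \<and> b \<in> V \<and> l = {a, b})"

definition links_at :: "'v set set \<Rightarrow> 'v \<Rightarrow> 'v set set" where
  "links_at E i = {l \<in> E. i \<in> l}"

definition nodeQ :: "'v set set \<Rightarrow> ('v set \<Rightarrow> nat) \<Rightarrow> 'v \<Rightarrow> nat" where
  "nodeQ E Q i = (\<Sum>l\<in>links_at E i. Q l)"

definition maxQ :: "'v set \<Rightarrow> 'v set set \<Rightarrow> ('v set \<Rightarrow> nat) \<Rightarrow> nat" where
  "maxQ V E Q = Max (nodeQ E Q ` V)"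

definition matching :: "'v set set \<Rightarrow> 'v set set \<Rightarrow> bool" where
  "matching E M \<longleftrightarrow> M \<subseteq> E \<and> (\<forall>l1\<in>M. \<forall>l2\<in>M. l1 \<noteq> l2 \<longrightarrow> l1 \<inter> l2 = {})"

definition feasible :: "'v set set \<Rightarrow> ('v set \<Rightarrow> nat) \<Rightarrow> 'v set set \<Rightarrow> bool" where
  "feasible E Q M \<longleftrightarrow> matching E M \<and> (\<forall>l\<in>M. Q l > 0)"

definition covered :: "'v set set \<Rightarrow> 'v \<Rightarrow> bool" where
  "covered M i \<longleftrightarrow> (\<exists>l\<in>M. i \<in> l)"

definition Rind :: "(nat \<Rightarrow> 'v set set) \<Rightarrow> nat \<Rightarrow> 'v \<Rightarrow> nat" where
  "Rind S k i = (if covered (S k) i then 1 else 0)"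

text \<open>U_i(k); R_i(k) = 0 for negative k (only relevant for k = 0, since k mod 3 = 2 implies k >= 2).\<close>
definition Uind :: "(nat \<Rightarrow> 'v set set) \<Rightarrow> nat \<Rightarrow> 'v \<Rightarrow> nat" where
  "Uind S k i = (if k mod 3 = 2 then Rind S (k - 1) i * Rind S (k - 2) i
                 else if k = 0 then 0 else Rind S (k - 1) i)"

definition heavy :: "'v set \<Rightarrow> 'v set set \<Rightarrow> ('v set \<Rightarrow> nat) \<Rightarrow> 'v \<Rightarrow> bool" where
  "heavy V E Q i \<longleftrightarrow>
     real (nodeQ E Q i) \<ge> (real (card V) - 1) / real (card V) * real (maxQ V E Q)"

definition nsb_w :: "'v set \<Rightarrow> 'v set set \<Rightarrow> (nat \<Rightarrow> 'v set set) \<Rightarrow> nat \<Rightarrow> ('v set \<Rightarrow> nat) \<Rightarrow> 'v \<Rightarrow> nat" where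
  "nsb_w V E S k Q i = (if heavy V E Q i then nodeQ E Q i * (2 - Uind S k i) else nodeQ E Q i)"

definition nsb_weight :: "'v set \<Rightarrow> 'v set set \<Rightarrow> (nat \<Rightarrow> 'v set set) \<Rightarrow> nat \<Rightarrow> ('v set \<Rightarrow> nat) \<Rightarrow> 'v set set \<Rightarrow> nat" where
  "nsb_weight V E S k Q M = (\<Sum>i\<in>{i\<in>V. covered M i}. nsb_w V E S k Q i)"

text \<open>A run of NSB with no arrivals: Q k is the queue vector in slot k, S k the schedule of slot k
  (any maximizer; ties broken arbitrarily).\<close>
definition nsb_run :: "'v set \<Rightarrow> 'v set set \<Rightarrow> (nat \<Rightarrow> 'v set \<Rightarrow> nat) \<Rightarrow> (nat \<Rightarrow> 'v set set) \<Rightarrow> bool" where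
  "nsb_run V E Q S \<longleftrightarrow> (\<forall>k.
      feasible E (Q k) (S k) \<and>
      (\<forall>M. feasible E (Q k) M \<longrightarrow> nsb_weight V E S k (Q k) M \<le> nsb_weight V E S k (Q k) (S k)) \<and>
      (\<forall>l. Q (Suc k) l = Q k l - (if l \<in> S k then 1 else 0)))"

end

theory Submission
  imports Defs
begin

lemma hall:
  fixes A :: "'a set" and N :: "'a \<Rightarrow> 'b set"
  assumes "finite A" "\<And>a. a \<in> A \<Longrightarrow> finite (N a)"
    "\<And>S. S \<subseteq> A \<Longrightarrow> card S \<le> card (\<Union>(N ` S))"
  shows "\<exists>\<sigma>. inj_on \<sigma> A \<and> (\<forall>a\<in>A. \<sigma> a \<in> N a)"
  using assms
proof (induction "card A" arbitrary: A N rule: less_induct)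
  case less
  show ?case
  proof (cases "A = {}")
    case True thus ?thesis by auto
  next
    case False
    show ?thesis
    proof (cases "\<exists>S. S \<subseteq> A \<and> S \<noteq> {} \<and> S \<noteq> A \<and> card S = card (\<Union>(N ` S))")
      case True
      then obtain S where S: "S \<subseteq> A" "S \<noteq> {}" "S \<noteq> A" "card S = card (\<Union>(N ` S))" by blast
      have fS: "finite S" using S(1) less.prems(1) finite_subset by blast
      have cS: "card S < card A" using S(1,3) less.prems(1) by (meson psubsetI psubset_card_mono)
      have "\<exists>\<sigma>. inj_on \<sigma> S \<and> (\<forall>a\<in>S. \<sigma> a \<in> N a)"
        by (rule less.hyps[OF cS]) (use fS less.prems S(1) in auto)
      then obtain \<sigma>1 where s1: "inj_on \<sigma>1 S" "\<forall>a\<in>S. \<sigma>1 a \<in> N a" by blast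
      define NS where "NS = \<Union>(N ` S)"
      define N2 where "N2 = (\<lambda>a. N a - NS)"
      have cpos: "card S > 0" using fS S(2) by auto
      have cA2: "card (A - S) < card A"
        using S(1) less.prems(1) cpos cS by (simp add: card_Diff_subset fS)
      have hall2: "card T \<le> card (\<Union>(N2 ` T))" if T: "T \<subseteq> A - S" for T
      proof -
        have fT: "finite T" using T less.prems(1) finite_subset by blast
        have eq: "\<Union>(N2 ` T) = \<Union>(N ` (T \<union> S)) - NS" by (auto simp: N2_def NS_def)
        have fin: "finite (\<Union>(N ` (T \<union> S)))" using T S(1) less.prems(2) fT fS by auto
        have sub: "NS \<subseteq> \<Union>(N ` (T \<union> S))" by (auto simp: NS_def)
        have "card (\<Union>(N ` (T \<union> S)) - NS) = card (\<Union>(N ` (T \<union> S))) - card NS"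
          by (rule card_Diff_subset) (use sub fin finite_subset in auto)
        moreover have "card (T \<union> S) \<le> card (\<Union>(N ` (T \<union> S)))"
          using less.prems(3)[of "T \<union> S"] T S(1) by auto
        moreover have "card (T \<union> S) = card T + card S"
          using T fT fS by (intro card_Un_disjoint) auto
        ultimately show ?thesis using eq S(4) NS_def by simp
      qed
      have "\<exists>\<sigma>. inj_on \<sigma> (A - S) \<and> (\<forall>a\<in>A-S. \<sigma> a \<in> N2 a)"
        by (rule less.hyps[OF cA2]) (use less.prems hall2 in \<open>auto simp: N2_def\<close>)
      then obtain \<sigma>2 where s2: "inj_on \<sigma>2 (A - S)" "\<forall>a\<in>A-S. \<sigma>2 a \<in> N2 a" by blast
      define \<sigma> where "\<sigma> = (\<lambda>a. if a \<in> S then \<sigma>1 a else \<sigma>2 a)"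
      have "inj_on \<sigma> A"
      proof (rule inj_onI)
        fix x y assume xy: "x \<in> A" "y \<in> A" "\<sigma> x = \<sigma> y"
        show "x = y"
        proof (cases "x \<in> S"; cases "y \<in> S")
          assume "x \<in> S" "y \<in> S" thus ?thesis using xy s1 by (auto simp: \<sigma>_def inj_on_def)
        next
          assume "x \<notin> S" "y \<notin> S" thus ?thesis using xy s2 by (auto simp: \<sigma>_def inj_on_def)
        next
          assume a: "x \<in> S" "y \<notin> S"
          hence "\<sigma> x \<in> NS" using s1 by (auto simp: \<sigma>_def NS_def)
          moreover have "y \<in> A - S" using a xy by blast
          hence "\<sigma> y \<notin> NS" using a s2(2) by (auto simp: \<sigma>_def N2_def)
          ultimately show ?thesis using xy by simp
        next
          assume a: "x \<notin> S" "y \<in> S"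
          hence "\<sigma> y \<in> NS" using s1 by (auto simp: \<sigma>_def NS_def)
          moreover have "x \<in> A - S" using a xy by blast
          hence "\<sigma> x \<notin> NS" using a s2(2) by (auto simp: \<sigma>_def N2_def)
          ultimately show ?thesis using xy by simp
        qed
      qed
      moreover have "\<forall>a\<in>A. \<sigma> a \<in> N a" using s1 s2 by (auto simp: \<sigma>_def N2_def)
      ultimately show ?thesis by blast
    next
      case nt: False
      obtain a where a: "a \<in> A" using False by blast
      have "card {a} \<le> card (N a)" using less.prems(3)[of "{a}"] a by simp
      hence "N a \<noteq> {}" by auto
      then obtain b where b: "b \<in> N a" by blast
      define N' where "N' = (\<lambda>x. N x - {b})"
      have cA': "card (A - {a}) < card A" using a less.prems(1) by (meson card_Diff1_less)
      have hall': "card T \<le> card (\<Union>(N' ` T))" if T: "T \<subseteq> A - {a}" for T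
      proof (cases "T = {}")
        case True thus ?thesis by simp
      next
        case Tne: False
        have fT: "finite T" using T less.prems(1) finite_subset by blast
        have fin: "finite (\<Union>(N ` T))" using T less.prems(2) fT by auto
        have "T \<noteq> A" using T a by auto
        hence ne: "card T \<noteq> card (\<Union>(N ` T))" using nt Tne T by blast
        have le: "card T \<le> card (\<Union>(N ` T))" using less.prems(3)[of T] T by blast
        have lt: "card T < card (\<Union>(N ` T))" using ne le by simp
        have eq: "\<Union>(N' ` T) = \<Union>(N ` T) - {b}" by (auto simp: N'_def)
        have "card (\<Union>(N ` T)) - 1 \<le> card (\<Union>(N ` T) - {b})"
          using fin by (simp add: card_Diff_singleton_if)
        thus ?thesis using lt eq by simp
      qed
      have "\<exists>\<sigma>. inj_on \<sigma> (A - {a}) \<and> (\<forall>x\<in>A-{a}. \<sigma> x \<in> N' x)"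
        by (rule less.hyps[OF cA']) (use less.prems hall' in \<open>auto simp: N'_def\<close>)
      then obtain \<sigma>' where s': "inj_on \<sigma>' (A - {a})" "\<forall>x\<in>A-{a}. \<sigma>' x \<in> N' x" by blast
      define \<sigma> where "\<sigma> = \<sigma>'(a := b)"
      have "inj_on \<sigma> A"
        using s' unfolding \<sigma>_def inj_on_def N'_def by auto
      moreover have "\<forall>x\<in>A. \<sigma> x \<in> N x" using s' b by (auto simp: \<sigma>_def N'_def)
      ultimately show ?thesis by blast
    qed
  qed
qed


definition pdisj :: "'v set set \<Rightarrow> bool" where
  "pdisj M \<longleftrightarrow> (\<forall>l1\<in>M. \<forall>l2\<in>M. l1 \<noteq> l2 \<longrightarrow> l1 \<inter> l2 = {})"

lemma conv:
  fixes K :: "'v set" and \<sigma> :: "'v \<Rightarrow> 'v" and c :: "'v \<Rightarrow> bool"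
  assumes "finite K" "inj_on \<sigma> K"
    "\<And>k. k \<in> K \<Longrightarrow> \<sigma> k \<in> K \<Longrightarrow> c (\<sigma> k) \<noteq> c k"
  shows "\<exists>M. M \<subseteq> (\<lambda>k. {k, \<sigma> k}) ` K \<and> pdisj M \<and> K \<subseteq> \<Union>M"
  using assms
proof (induction "card K" arbitrary: K rule: less_induct)
  case less
  show ?case
  proof (cases "K \<subseteq> \<sigma> ` K")
    case True
    have "card (\<sigma> ` K) = card K" using less.prems(2) by (simp add: card_image)
    hence eqK: "\<sigma> ` K = K"
      using True less.prems(1) by (metis card_subset_eq finite_imageI)
    define M where "M = (\<lambda>k. {k, \<sigma> k}) ` {k\<in>K. c k}"
    have dj: "{k, \<sigma> k} \<inter> {k', \<sigma> k'} = {}"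
      if k: "k \<in> K" "c k" and k': "k' \<in> K" "c k'" and kk: "k \<noteq> k'" for k k'
    proof -
      have sk: "\<sigma> k \<in> K" "\<sigma> k' \<in> K" using eqK k k' by auto
      have "\<sigma> k \<noteq> \<sigma> k'" using kk less.prems(2) k k' by (auto simp: inj_on_def)
      moreover have "k \<noteq> \<sigma> k'" using less.prems(3)[of k'] k k' sk by auto
      moreover have "\<sigma> k \<noteq> k'" using less.prems(3)[of k] k k' sk by auto
      ultimately show ?thesis using kk by auto
    qed
    have "pdisj M"
    proof (unfold pdisj_def, intro ballI impI)
      fix l1 l2 assume l: "l1 \<in> M" "l2 \<in> M" "l1 \<noteq> l2"
      obtain k1 where k1: "k1 \<in> K" "c k1" "l1 = {k1, \<sigma> k1}" using l(1) by (auto simp: M_def)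
      obtain k2 where k2: "k2 \<in> K" "c k2" "l2 = {k2, \<sigma> k2}" using l(2) by (auto simp: M_def)
      have "k1 \<noteq> k2" using k1 k2 l(3) by auto
      thus "l1 \<inter> l2 = {}" using dj[OF k1(1,2) k2(1,2)] k1 k2 by simp
    qed
    moreover have "K \<subseteq> \<Union>M"
    proof
      fix k assume k: "k \<in> K"
      show "k \<in> \<Union>M"
      proof (cases "c k")
        case True thus ?thesis using k by (auto simp: M_def)
      next
        case False
        obtain k'' where k'': "k'' \<in> K" "k = \<sigma> k''" using eqK k by blast
        hence "c k''" using less.prems(3)[of k''] k False by auto
        thus ?thesis using k'' by (auto simp: M_def)
      qed
    qed
    moreover have "M \<subseteq> (\<lambda>k. {k, \<sigma> k}) ` K" by (auto simp: M_def)
    ultimately show ?thesis by blast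
  next
    case False
    then obtain k where k: "k \<in> K" "k \<notin> \<sigma> ` K" by blast
    define K' where "K' = K - {k, \<sigma> k}"
    have cK: "card K' < card K" unfolding K'_def
      by (rule psubset_card_mono) (use k less.prems(1) in auto)
    have "\<exists>M. M \<subseteq> (\<lambda>k. {k, \<sigma> k}) ` K' \<and> pdisj M \<and> K' \<subseteq> \<Union>M"
      by (rule less.hyps[OF cK]) (use less.prems in \<open>auto simp: K'_def intro: inj_on_subset\<close>)
    then obtain M' where M': "M' \<subseteq> (\<lambda>k. {k, \<sigma> k}) ` K'" "pdisj M'" "K' \<subseteq> \<Union>M'" by blast
    define M where "M = insert {k, \<sigma> k} M'"
    have disj: "l \<inter> {k, \<sigma> k} = {}" if l: "l \<in> M'" for l
    proof -
      obtain k' where k': "k' \<in> K'" "l = {k', \<sigma> k'}" using l M'(1) by blast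
      have "k' \<in> K" "k' \<noteq> k" "k' \<noteq> \<sigma> k" using k' by (auto simp: K'_def)
      moreover have "\<sigma> k' \<noteq> k" using k k' \<open>k' \<in> K\<close> by auto
      moreover have "\<sigma> k' \<noteq> \<sigma> k" using less.prems(2) k \<open>k' \<in> K\<close> \<open>k' \<noteq> k\<close>
        by (auto simp: inj_on_def)
      ultimately show ?thesis using k' by auto
    qed
    have "pdisj M"
      using M'(2) disj unfolding pdisj_def M_def by (auto simp: Int_commute)
    moreover have "K \<subseteq> \<Union>M" using M'(3) by (auto simp: M_def K'_def)
    moreover have "M \<subseteq> (\<lambda>k. {k, \<sigma> k}) ` K" using M'(1) k by (auto simp: M_def K'_def)
    ultimately show ?thesis by blast
  qed
qed


lemma pdisj_subset: "pdisj M \<Longrightarrow> M' \<subseteq> M \<Longrightarrow> pdisj M'"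
  unfolding pdisj_def by blast

lemma pdisj_Union_remove:
  assumes "pdisj M" "m \<in> M" shows "\<Union>(M - {m}) = \<Union>M - m"
  using assms unfolding pdisj_def by blast

lemma pdisj_unique: "pdisj M \<Longrightarrow> l1 \<in> M \<Longrightarrow> l2 \<in> M \<Longrightarrow> x \<in> l1 \<Longrightarrow> x \<in> l2 \<Longrightarrow> l1 = l2"
  unfolding pdisj_def by blast

lemma exch:
  assumes "finite N" "pdisj M" "pdisj N" "\<And>l. l \<in> M \<union> N \<Longrightarrow> \<exists>a b. a \<noteq> b \<and> l = {a,b}"
    "f \<in> \<Union>N" "f \<notin> \<Union>M"
  shows "\<exists>M'. M' \<subseteq> M \<union> N \<and> pdisj M' \<and>
     ((\<exists>g. g \<notin> \<Union>M \<and> g \<noteq> f \<and> \<Union>M' = \<Union>M \<union> {f,g}) \<or>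
      (\<exists>g. g \<in> \<Union>M \<and> g \<notin> \<Union>N \<and> \<Union>M' = insert f (\<Union>M) - {g}))"
  using assms
proof (induction "card N" arbitrary: M N f rule: less_induct)
  case less
  obtain l where l: "l \<in> N" "f \<in> l" using less.prems(5) by blast
  obtain a b where ab: "a \<noteq> b" "l = {a,b}" using less.prems(4)[of l] l(1) by blast
  obtain v1 where v1: "l = {f, v1}" "v1 \<noteq> f" using ab l(2) by auto
  show ?case
  proof (cases "v1 \<in> \<Union>M")
    case False
    define M' where "M' = insert l M"
    have "pdisj M'" using less.prems(2) False less.prems(6) v1
      unfolding pdisj_def M'_def by blast
    moreover have "\<Union>M' = \<Union>M \<union> {f, v1}" using v1 by (auto simp: M'_def)
    ultimately show ?thesis using False v1 l(1) by (auto simp: M'_def)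
  next
    case True
    then obtain m where m: "m \<in> M" "v1 \<in> m" by blast
    obtain a b where "a \<noteq> b" "m = {a,b}" using less.prems(4)[of m] m(1) by blast
    then obtain v2 where v2: "m = {v1, v2}" "v2 \<noteq> v1" using m(2) by auto
    have v2f: "v2 \<noteq> f" using v2 m(1) less.prems(6) by auto
    have UM0: "\<Union>(M - {m}) = \<Union>M - m" by (rule pdisj_Union_remove[OF less.prems(2) m(1)])
    show ?thesis
    proof (cases "v2 \<in> \<Union>N")
      case False
      define M' where "M' = insert l (M - {m})"
      have "pdisj (M - {m})" using less.prems(2) by (rule pdisj_subset) auto
      moreover have "l \<inter> l' = {}" if "l' \<in> M - {m}" for l'
      proof -
        have "f \<notin> l'" using that less.prems(6) by auto
        moreover have "v1 \<notin> l'" using that pdisj_unique[OF less.prems(2), of m l' v1] m by auto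
        ultimately show ?thesis using v1 by auto
      qed
      ultimately have pd: "pdisj M'" unfolding pdisj_def M'_def by (auto simp: Int_commute)
      have ue: "\<Union>M' = insert f (\<Union>M) - {v2}"
        using UM0 v1 v2 v2f m by (auto simp: M'_def)
      have v2M: "v2 \<in> \<Union>M" using m v2 by auto
      have sub': "M' \<subseteq> M \<union> N" using l(1) by (auto simp: M'_def)
      show ?thesis using sub' pd ue v2M False by blast
    next
      case True
      define M0 where "M0 = M - {m}"
      define N0 where "N0 = N - {l}"
      have cN: "card N0 < card N" unfolding N0_def using l(1) less.prems(1) by (meson card_Diff1_less)
      have v2N0: "v2 \<in> \<Union>N0"
      proof -
        obtain l'' where "l'' \<in> N" "v2 \<in> l''" using True by blast
        moreover have "l'' \<noteq> l" using v1 v2 v2f calculation by auto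
        ultimately show ?thesis by (auto simp: N0_def)
      qed
      have v2M0: "v2 \<notin> \<Union>M0" using UM0 v2 by (auto simp: M0_def)
      have fN0: "finite N0" using less.prems(1) by (simp add: N0_def)
      have pM0: "pdisj M0" by (rule pdisj_subset[OF less.prems(2)]) (auto simp: M0_def)
      have pN0: "pdisj N0" by (rule pdisj_subset[OF less.prems(3)]) (auto simp: N0_def)
      have tw: "\<exists>a b. a \<noteq> b \<and> l' = {a,b}" if "l' \<in> M0 \<union> N0" for l'
      proof -
        have "l' \<in> M \<union> N" using that by (auto simp: M0_def N0_def)
        thus ?thesis by (rule less.prems(4))
      qed
      have "\<exists>M'. M' \<subseteq> M0 \<union> N0 \<and> pdisj M' \<and>
         ((\<exists>g. g \<notin> \<Union>M0 \<and> g \<noteq> v2 \<and> \<Union>M' = \<Union>M0 \<union> {v2,g}) \<or>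
          (\<exists>g. g \<in> \<Union>M0 \<and> g \<notin> \<Union>N0 \<and> \<Union>M' = insert v2 (\<Union>M0) - {g}))"
        by (rule less.hyps[OF cN fN0 pM0 pN0 tw v2N0 v2M0])
      then obtain M0' where M0all: "M0' \<subseteq> M0 \<union> N0 \<and> pdisj M0' \<and>
        ((\<exists>g. g \<notin> \<Union>M0 \<and> g \<noteq> v2 \<and> \<Union>M0' = \<Union>M0 \<union> {v2,g}) \<or>
          (\<exists>g. g \<in> \<Union>M0 \<and> g \<notin> \<Union>N0 \<and> \<Union>M0' = insert v2 (\<Union>M0) - {g}))" ..
      note M0' = conjunct1[OF M0all] conjunct1[OF conjunct2[OF M0all]] conjunct2[OF conjunct2[OF M0all]]
      have fnot: "f \<notin> \<Union>(M0 \<union> N0)"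
      proof
        assume "f \<in> \<Union>(M0 \<union> N0)"
        then obtain l' where l': "l' \<in> M0 \<union> N0" "f \<in> l'" by blast
        show False
        proof (cases "l' \<in> M0")
          case True thus False using l' less.prems(6) by (auto simp: M0_def)
        next
          case False
          hence "l' \<in> N" "l' \<noteq> l" using l' by (auto simp: N0_def)
          thus False using pdisj_unique[OF less.prems(3) l(1), of l' f] l' l by auto
        qed
      qed
      have v1not: "v1 \<notin> \<Union>(M0 \<union> N0)"
      proof
        assume "v1 \<in> \<Union>(M0 \<union> N0)"
        then obtain l' where l': "l' \<in> M0 \<union> N0" "v1 \<in> l'" by blast
        show False
        proof (cases "l' \<in> M0")
          case True
          hence "l' \<in> M" "l' \<noteq> m" by (auto simp: M0_def)
          thus False using pdisj_unique[OF less.prems(2) m(1), of l' v1] l' m by auto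
        next
          case False
          hence "l' \<in> N" "l' \<noteq> l" using l' by (auto simp: N0_def)
          thus False using pdisj_unique[OF less.prems(3) l(1), of l' v1] l' v1 by auto
        qed
      qed
      have sub0: "\<Union>M0' \<subseteq> \<Union>(M0 \<union> N0)" using M0'(1) by blast
      define M' where "M' = insert l M0'"
      have pdM: "pdisj M'"
      proof -
        have "l \<inter> l' = {}" if "l' \<in> M0'" for l'
          using that sub0 fnot v1not v1 by blast
        thus ?thesis using M0'(2) unfolding pdisj_def M'_def by (auto simp: Int_commute)
      qed
      have subM: "M' \<subseteq> M \<union> N" using M0'(1) l(1) by (auto simp: M'_def M0_def N0_def)
      have UM0': "\<Union>M0 = \<Union>M - {v1, v2}" using UM0 v2 by (simp add: M0_def)
      have UN: "\<Union>N = \<Union>N0 \<union> {f, v1}" using l(1) v1 by (auto simp: N0_def)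
      have "v2 \<in> \<Union>M" using m v2 by auto
      have "v1 \<in> \<Union>M" using m by auto
      have disj: "(\<exists>g. g \<notin> \<Union>M \<and> g \<noteq> f \<and> \<Union>M' = \<Union>M \<union> {f,g}) \<or>
          (\<exists>g. g \<in> \<Union>M \<and> g \<notin> \<Union>N \<and> \<Union>M' = insert f (\<Union>M) - {g})"
        using M0'(3)
      proof
        assume "\<exists>g. g \<notin> \<Union>M0 \<and> g \<noteq> v2 \<and> \<Union>M0' = \<Union>M0 \<union> {v2,g}"
        then obtain g where g: "g \<notin> \<Union>M0" "g \<noteq> v2" "\<Union>M0' = \<Union>M0 \<union> {v2,g}" by blast
        have "g \<in> \<Union>M0'" using g(3) by auto
        hence gfv: "g \<noteq> f" "g \<noteq> v1" using sub0 fnot v1not by auto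
        have "g \<notin> \<Union>M" using g(1,2) gfv UM0' by auto
        moreover have "\<Union>M' = \<Union>M \<union> {f,g}"
        proof -
          have "\<Union>M' = {f, v1} \<union> \<Union>M0'" by (simp add: M'_def v1(1))
          also have "\<dots> = {f, v1} \<union> (\<Union>M - {v1, v2}) \<union> {v2, g}" using g(3) UM0' by simp
          also have "\<dots> = \<Union>M \<union> {f,g}" using \<open>v2 \<in> \<Union>M\<close> \<open>v1 \<in> \<Union>M\<close> by blast
          finally show ?thesis .
        qed
        ultimately show ?thesis using gfv by (intro disjI1) blast
      next
        assume "\<exists>g. g \<in> \<Union>M0 \<and> g \<notin> \<Union>N0 \<and> \<Union>M0' = insert v2 (\<Union>M0) - {g}"
        then obtain g where g: "g \<in> \<Union>M0" "g \<notin> \<Union>N0" "\<Union>M0' = insert v2 (\<Union>M0) - {g}" by blast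
        have gfv: "g \<noteq> f" "g \<noteq> v1" "g \<noteq> v2" using g(1) UM0' less.prems(6) by auto
        have "g \<in> \<Union>M" using g(1) UM0' by auto
        moreover have "g \<notin> \<Union>N" using g(2) gfv UN by auto
        moreover have "\<Union>M' = insert f (\<Union>M) - {g}"
        proof -
          have "\<Union>M' = {f, v1} \<union> \<Union>M0'" by (simp add: M'_def v1(1))
          also have "\<dots> = {f, v1} \<union> (insert v2 (\<Union>M - {v1, v2}) - {g})" using g(3) UM0' by simp
          also have "\<dots> = insert f (\<Union>M) - {g}"
            using \<open>v2 \<in> \<Union>M\<close> \<open>v1 \<in> \<Union>M\<close> gfv by blast
          finally show ?thesis .
        qed
        ultimately show ?thesis by (intro disjI2) blast
      qed
      show ?thesis using subM pdM disj by (intro exI[of _ M'] conjI)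
    qed
  qed
qed

lemma sg_finite: "simple_graph V E \<Longrightarrow> finite V"
  unfolding simple_graph_def by blast

lemma sg_edge: "simple_graph V E \<Longrightarrow> l \<in> E \<Longrightarrow> \<exists>a b. a \<noteq> b \<and> a \<in> V \<and> b \<in> V \<and> l = {a,b}"
  unfolding simple_graph_def by blast

lemma sg_sub: "simple_graph V E \<Longrightarrow> l \<in> E \<Longrightarrow> l \<subseteq> V"
  using sg_edge by fastforce

lemma sg_finE: "simple_graph V E \<Longrightarrow> finite E"
proof -
  assume sg: "simple_graph V E"
  have "E \<subseteq> Pow V" using sg_sub[OF sg] by blast
  thus "finite E" using sg_finite[OF sg] by (meson finite_Pow_iff finite_subset)
qed

lemma sg_noloop: "simple_graph V E \<Longrightarrow> {a,b} \<in> E \<Longrightarrow> a \<noteq> b"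
  using sg_edge by (fastforce simp: doubleton_eq_iff)

lemma covered_iff: "covered M i \<longleftrightarrow> i \<in> \<Union>M"
  unfolding covered_def by blast

lemma feas_pdisj: "feasible E q M \<Longrightarrow> pdisj M"
  unfolding feasible_def matching_def pdisj_def by blast

lemma feas_sub: "feasible E q M \<Longrightarrow> M \<subseteq> E"
  unfolding feasible_def matching_def by blast

lemma feas_pos: "feasible E q M \<Longrightarrow> l \<in> M \<Longrightarrow> 0 < q l"
  unfolding feasible_def by blast

lemma feasI: "M \<subseteq> E \<Longrightarrow> pdisj M \<Longrightarrow> (\<And>l. l \<in> M \<Longrightarrow> 0 < q l) \<Longrightarrow> feasible E q M"
  unfolding feasible_def matching_def pdisj_def by blast

lemma cov_set: "simple_graph V E \<Longrightarrow> M \<subseteq> E \<Longrightarrow> {i\<in>V. covered M i} = \<Union>M"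
  using sg_sub unfolding covered_def by blast

lemma top_lemma:
  fixes w :: "'v \<Rightarrow> nat"
  assumes sg: "simple_graph V E"
  and Mf: "feasible E q M"
  and opt: "\<And>M'. feasible E q M' \<Longrightarrow> (\<Sum>i\<in>{i\<in>V. covered M' i}. w i) \<le> (\<Sum>i\<in>{i\<in>V. covered M i}. w i)"
  and f: "f \<in> K" "\<not> covered M f" "0 < w f"
  and Nf: "feasible E q N" "\<And>v. v \<in> K \<Longrightarrow> covered N v"
  and Kt: "\<And>v. v \<in> V \<Longrightarrow> w f \<le> w v \<Longrightarrow> v \<in> K"
  shows False
proof -
  have finN: "finite N" using sg_finE[OF sg] feas_sub[OF Nf(1)] finite_subset by blast
  have twos: "\<And>l. l \<in> M \<union> N \<Longrightarrow> \<exists>a b. a \<noteq> b \<and> l = {a,b}"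
    using sg_edge[OF sg] feas_sub[OF Mf] feas_sub[OF Nf(1)] by blast
  have fN: "f \<in> \<Union>N" using Nf(2)[OF f(1)] by (simp add: covered_iff)
  have fM: "f \<notin> \<Union>M" using f(2) by (simp add: covered_iff)
  obtain M' where Mall: "M' \<subseteq> M \<union> N \<and> pdisj M' \<and>
    ((\<exists>g. g \<notin> \<Union>M \<and> g \<noteq> f \<and> \<Union>M' = \<Union>M \<union> {f,g}) \<or>
     (\<exists>g. g \<in> \<Union>M \<and> g \<notin> \<Union>N \<and> \<Union>M' = insert f (\<Union>M) - {g}))"
    using exch[OF finN feas_pdisj[OF Mf] feas_pdisj[OF Nf(1)] twos fN fM] ..
  note M' = conjunct1[OF Mall] conjunct1[OF conjunct2[OF Mall]] conjunct2[OF conjunct2[OF Mall]]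
  have M'E: "M' \<subseteq> E" using M'(1) feas_sub[OF Mf] feas_sub[OF Nf(1)] by blast
  have M'f: "feasible E q M'"
    by (rule feasI[OF M'E M'(2)]) (use M'(1) feas_pos[OF Mf] feas_pos[OF Nf(1)] in blast)
  have le: "sum w (\<Union>M') \<le> sum w (\<Union>M)"
    using opt[OF M'f] cov_set[OF sg M'E] cov_set[OF sg feas_sub[OF Mf]] by simp
  have finM: "finite (\<Union>M)" using sg_finite[OF sg] cov_set[OF sg feas_sub[OF Mf]]
    by (metis (no_types, lifting) finite_subset mem_Collect_eq subsetI)
  have UMV: "\<Union>M \<subseteq> V" using cov_set[OF sg feas_sub[OF Mf]] by blast
  show False using M'(3)
  proof
    assume "\<exists>g. g \<notin> \<Union>M \<and> g \<noteq> f \<and> \<Union>M' = \<Union>M \<union> {f,g}"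
    then obtain g where g: "g \<notin> \<Union>M" "g \<noteq> f" "\<Union>M' = \<Union>M \<union> {f,g}" by blast
    have "\<Union>M' = insert f (insert g (\<Union>M))" using g(3) by auto
    hence "sum w (\<Union>M') = w f + (w g + sum w (\<Union>M))" using finM g fM by simp
    thus False using le f(3) by simp
  next
    assume "\<exists>g. g \<in> \<Union>M \<and> g \<notin> \<Union>N \<and> \<Union>M' = insert f (\<Union>M) - {g}"
    then obtain g where g: "g \<in> \<Union>M" "g \<notin> \<Union>N" "\<Union>M' = insert f (\<Union>M) - {g}" by blast
    have "sum w (insert f (\<Union>M)) = w g + sum w (insert f (\<Union>M) - {g})"
      using finM g(1) by (simp add: sum.remove)
    hence "w f + sum w (\<Union>M) = w g + sum w (\<Union>M')" using finM fM g(3) by simp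
    hence "w f \<le> w g" using le by simp
    hence "g \<in> K" using Kt UMV g(1) by blast
    thus False using Nf(2) g(2) by (simp add: covered_iff)
  qed
qed

lemma augment:
  fixes w :: "'v \<Rightarrow> nat"
  assumes sg: "simple_graph V E"
  and Mf: "feasible E q M"
  and opt: "\<And>M'. feasible E q M' \<Longrightarrow> (\<Sum>i\<in>{i\<in>V. covered M' i}. w i) \<le> (\<Sum>i\<in>{i\<in>V. covered M i}. w i)"
  and ab: "\<not> covered M a" "\<not> covered M b" "{a,b} \<in> E" "0 < q {a,b}" "0 < w a"
  shows False
proof -
  define M' where "M' = insert {a,b} M"
  have M'E: "M' \<subseteq> E" using ab(3) feas_sub[OF Mf] by (auto simp: M'_def)
  have "pdisj M'" using feas_pdisj[OF Mf] ab(1,2) unfolding pdisj_def M'_def covered_def by blast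
  hence M'f: "feasible E q M'"
    by (rule feasI[OF M'E]) (use ab(4) feas_pos[OF Mf] in \<open>auto simp: M'_def\<close>)
  have le: "sum w (\<Union>M') \<le> sum w (\<Union>M)"
    using opt[OF M'f] cov_set[OF sg M'E] cov_set[OF sg feas_sub[OF Mf]] by simp
  have finM: "finite (\<Union>M)" using sg_finite[OF sg] cov_set[OF sg feas_sub[OF Mf]]
    by (metis (no_types, lifting) finite_subset mem_Collect_eq subsetI)
  have "a \<noteq> b" using sg_noloop[OF sg ab(3)] .
  have "\<Union>M' = insert a (insert b (\<Union>M))" by (auto simp: M'_def)
  hence "sum w (\<Union>M') = w a + (w b + sum w (\<Union>M))"
    using finM ab(1,2) \<open>a \<noteq> b\<close> by (simp add: covered_iff)
  thus False using le ab(5) by simp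
qed
definition Nb :: "'v set set \<Rightarrow> ('v set \<Rightarrow> nat) \<Rightarrow> 'v \<Rightarrow> 'v set" where
  "Nb E q a = {b. {a,b} \<in> E \<and> 0 < q {a,b}}"

lemma Nb_sub: "simple_graph V E \<Longrightarrow> Nb E q a \<subseteq> V"
  unfolding Nb_def using sg_sub by blast

lemma Nb_sym: "b \<in> Nb E q a \<longleftrightarrow> a \<in> Nb E q b"
  unfolding Nb_def by (simp add: insert_commute)

lemma nodeQ_Nb:
  assumes sg: "simple_graph V E"
  shows "nodeQ E q a = (\<Sum>b\<in>Nb E q a. q {a,b})"
proof -
  define B where "B = {b. {a,b} \<in> E}"
  have BV: "B \<subseteq> V" unfolding B_def using sg_sub[OF sg] by blast
  have finB: "finite B" using BV sg_finite[OF sg] finite_subset by blast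
  have img: "links_at E a = (\<lambda>b. {a,b}) ` B"
  proof
    show "links_at E a \<subseteq> (\<lambda>b. {a,b}) ` B"
    proof
      fix l assume l: "l \<in> links_at E a"
      hence lE: "l \<in> E" "a \<in> l" by (auto simp: links_at_def)
      obtain x y where xy: "l = {x,y}" using sg_edge[OF sg lE(1)] by blast
      show "l \<in> (\<lambda>b. {a,b}) ` B"
      proof (cases "a = x")
        case True thus ?thesis using xy lE by (auto simp: B_def)
      next
        case False
        hence "a = y" using xy lE by auto
        hence "l = {a, x}" using xy by auto
        thus ?thesis using lE by (auto simp: B_def)
      qed
    qed
  next
    show "(\<lambda>b. {a,b}) ` B \<subseteq> links_at E a" by (auto simp: B_def links_at_def)
  qed
  have inj: "inj_on (\<lambda>b. {a,b}) B" by (auto simp: inj_on_def doubleton_eq_iff)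
  have "nodeQ E q a = (\<Sum>b\<in>B. q {a,b})"
    unfolding nodeQ_def img by (simp add: sum.reindex[OF inj])
  also have "\<dots> = (\<Sum>b\<in>Nb E q a. q {a,b})"
    by (rule sum.mono_neutral_right[OF finB]) (auto simp: B_def Nb_def)
  finally show ?thesis .
qed

lemma count_lemma:
  assumes sg: "simple_graph V E" and SV: "S \<subseteq> V"
    and le: "\<And>v. v \<in> V \<Longrightarrow> nodeQ E q v \<le> D"
    and eq: "\<And>s. s \<in> S \<Longrightarrow> nodeQ E q s = D" and D: "0 < D"
  shows "card S \<le> card (\<Union>(Nb E q ` S))"
proof -
  define NS where "NS = \<Union>(Nb E q ` S)"
  have NSV: "NS \<subseteq> V" unfolding NS_def using Nb_sub[OF sg] by blast
  have finV: "finite V" by (rule sg_finite[OF sg])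
  have finS: "finite S" using SV finV finite_subset by blast
  have finNS: "finite NS" using NSV finV finite_subset by blast
  have "D * card S = (\<Sum>s\<in>S. nodeQ E q s)" using eq by simp
  also have "\<dots> = (\<Sum>s\<in>S. \<Sum>b\<in>Nb E q s. q {s,b})" using nodeQ_Nb[OF sg] by simp
  also have "\<dots> = (\<Sum>s\<in>S. \<Sum>b\<in>NS. if b \<in> Nb E q s then q {s,b} else 0)"
  proof (rule sum.cong[OF refl])
    fix s assume s: "s \<in> S"
    have "{b \<in> NS. b \<in> Nb E q s} = Nb E q s" using s by (auto simp: NS_def)
    thus "(\<Sum>b\<in>Nb E q s. q {s,b}) = (\<Sum>b\<in>NS. if b \<in> Nb E q s then q {s,b} else 0)"
      using sum.inter_filter[OF finNS, of "\<lambda>b. q {s,b}" "\<lambda>b. b \<in> Nb E q s"] by simp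
  qed
  also have "\<dots> = (\<Sum>b\<in>NS. \<Sum>s\<in>S. if b \<in> Nb E q s then q {s,b} else 0)"
    by (rule sum.swap)
  also have "\<dots> \<le> (\<Sum>b\<in>NS. nodeQ E q b)"
  proof (rule sum_mono)
    fix b assume b: "b \<in> NS"
    have finNb: "finite (Nb E q b)" using Nb_sub[OF sg] finV finite_subset by blast
    have "(\<Sum>s\<in>S. if b \<in> Nb E q s then q {s,b} else 0) = (\<Sum>s\<in>{s\<in>S. b \<in> Nb E q s}. q {s,b})"
      by (rule sum.inter_filter[OF finS, symmetric])
    also have "\<dots> = (\<Sum>s\<in>{s\<in>S. b \<in> Nb E q s}. q {b,s})" by (simp add: insert_commute)
    also have "\<dots> \<le> (\<Sum>s\<in>Nb E q b. q {b,s})"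
      by (rule sum_mono2[OF finNb]) (auto simp: Nb_sym)
    also have "\<dots> = nodeQ E q b" using nodeQ_Nb[OF sg] by simp
    finally show "(\<Sum>s\<in>S. if b \<in> Nb E q s then q {s,b} else 0) \<le> nodeQ E q b" .
  qed
  also have "\<dots> \<le> (\<Sum>b\<in>NS. D)" by (rule sum_mono) (use le NSV in blast)
  also have "\<dots> = D * card NS" by simp
  finally have "D * card S \<le> D * card NS" .
  thus ?thesis using D by (simp add: NS_def)
qed

lemma cover_lemma:
  fixes c :: "'v \<Rightarrow> bool" and V :: "'v set"
  assumes sg: "simple_graph V E" and KV: "K \<subseteq> V"
    and le: "\<And>v. v \<in> V \<Longrightarrow> nodeQ E q v \<le> D"
    and eq: "\<And>s. s \<in> K \<Longrightarrow> nodeQ E q s = D" and D: "0 < D"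
    and col: "\<And>a b. a \<in> K \<Longrightarrow> b \<in> K \<Longrightarrow> {a,b} \<in> E \<Longrightarrow> 0 < q {a,b} \<Longrightarrow> c a \<noteq> c b"
  shows "\<exists>N. feasible E q N \<and> (\<forall>v\<in>K. covered N v)"
proof -
  have finV: "finite V" by (rule sg_finite[OF sg])
  have finK: "finite K" using KV finV finite_subset by blast
  have "\<exists>\<sigma>. inj_on \<sigma> K \<and> (\<forall>a\<in>K. \<sigma> a \<in> Nb E q a)"
  proof (rule hall[OF finK])
    fix a show "finite (Nb E q a)" using Nb_sub[OF sg] finV finite_subset by blast
  next
    fix S assume "S \<subseteq> K"
    thus "card S \<le> card (\<Union>(Nb E q ` S))"
      using count_lemma[OF sg _ le eq D] KV by blast
  qed
  then obtain \<sigma> where s: "inj_on \<sigma> K" "\<forall>a\<in>K. \<sigma> a \<in> Nb E q a" by blast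
  have "\<exists>M. M \<subseteq> (\<lambda>k. {k, \<sigma> k}) ` K \<and> pdisj M \<and> K \<subseteq> \<Union>M"
  proof (rule conv[OF finK s(1), where c=c])
    fix k assume "k \<in> K" "\<sigma> k \<in> K"
    thus "c (\<sigma> k) \<noteq> c k" using col[of k "\<sigma> k"] s(2) by (auto simp: Nb_def)
  qed
  then obtain M where M: "M \<subseteq> (\<lambda>k. {k, \<sigma> k}) ` K" "pdisj M" "K \<subseteq> \<Union>M" by blast
  have "feasible E q M"
  proof (rule feasI[OF _ M(2)])
    show "M \<subseteq> E" using M(1) s(2) by (auto simp: Nb_def)
  next
    fix l assume "l \<in> M" thus "0 < q l" using M(1) s(2) by (auto simp: Nb_def)
  qed
  moreover have "\<forall>v\<in>K. covered M v" using M(3) by (auto simp: covered_iff)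
  ultimately show ?thesis by blast
qed

lemma Rind_le: "Rind S k i \<le> 1" by (simp add: Rind_def)
lemma Uind_le: "Uind S k i \<le> 1"
  unfolding Uind_def Rind_def by auto

lemma w_ge: "nodeQ E q i \<le> nsb_w V E S k q i"
  using Uind_le[of S k i] unfolding nsb_w_def by auto

lemma w_le: "nsb_w V E S k q i \<le> 2 * nodeQ E q i"
  unfolding nsb_w_def by auto

lemma w_two: "2 * nodeQ E q i \<le> nsb_w V E S k q i \<Longrightarrow> 0 < nodeQ E q i \<Longrightarrow> Uind S k i = 0"
  using Uind_le[of S k i] unfolding nsb_w_def
  by (cases "Uind S k i") (auto split: if_splits)

lemma heavy_max:
  assumes "finite V" "V \<noteq> {}" "nodeQ E q i = maxQ V E q"
  shows "heavy V E q i"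
proof -
  have "card V > 0" using assms(1,2) by (simp add: card_gt_0_iff)
  hence c: "real (card V) \<ge> 1" by simp
  have "(real (card V) - 1) / real (card V) \<le> 1" using c by simp
  moreover have "0 \<le> (real (card V) - 1) / real (card V)" using c by simp
  ultimately have "(real (card V) - 1) / real (card V) * real (maxQ V E q) \<le> real (maxQ V E q)"
    by (intro mult_left_le_one_le) auto
  thus ?thesis unfolding heavy_def using assms(3) by simp
qed

lemma w_max:
  assumes "finite V" "V \<noteq> {}" "nodeQ E q i = maxQ V E q" "Uind S k i = 0"
  shows "nsb_w V E S k q i = 2 * nodeQ E q i"
  using heavy_max[OF assms(1-3)] assms(4) unfolding nsb_w_def by simp

lemma maxQ_ge: "simple_graph V E \<Longrightarrow> i \<in> V \<Longrightarrow> nodeQ E q i \<le> maxQ V E q"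
  unfolding maxQ_def using sg_finite by (metis Max_ge finite_imageI imageI)

lemma maxQ_eq:
  assumes sg: "simple_graph V E" and "i \<in> V" "nodeQ E q i = D" "\<And>v. v \<in> V \<Longrightarrow> nodeQ E q v \<le> D"
  shows "maxQ V E q = D"
proof -
  have fin: "finite (nodeQ E q ` V)" using sg_finite[OF sg] by simp
  have ne: "nodeQ E q ` V \<noteq> {}" using assms(2) by blast
  have "maxQ V E q \<le> D" unfolding maxQ_def using fin ne assms(4) by (subst Max_le_iff) auto
  moreover have "D \<le> maxQ V E q" using maxQ_ge[OF sg assms(2), of q] assms(3) by simp
  ultimately show ?thesis by simp
qed

lemma maxQ_le:
  assumes sg: "simple_graph V E" and "V \<noteq> {}" "\<And>v. v \<in> V \<Longrightarrow> nodeQ E q v \<le> D"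
  shows "maxQ V E q \<le> D"
  unfolding maxQ_def using sg_finite[OF sg] assms(2,3) by (subst Max_le_iff) auto

lemma run_feas: "nsb_run V E Q S \<Longrightarrow> feasible E (Q k) (S k)"
  unfolding nsb_run_def by blast

lemma run_opt: "nsb_run V E Q S \<Longrightarrow> feasible E (Q k) M' \<Longrightarrow>
  (\<Sum>i\<in>{i\<in>V. covered M' i}. nsb_w V E S k (Q k) i) \<le> (\<Sum>i\<in>{i\<in>V. covered (S k) i}. nsb_w V E S k (Q k) i)"
  unfolding nsb_run_def nsb_weight_def by blast

lemma run_step: "nsb_run V E Q S \<Longrightarrow> Q (Suc k) l = Q k l - (if l \<in> S k then 1 else 0)"
  unfolding nsb_run_def by blast

lemma link_mono: "nsb_run V E Q S \<Longrightarrow> Q (Suc k) l \<le> Q k l"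
  using run_step by fastforce

lemma nodeQ_step:
  assumes sg: "simple_graph V E" and run: "nsb_run V E Q S"
  shows "nodeQ E (Q (Suc k)) i = nodeQ E (Q k) i - (if covered (S k) i then 1 else 0)"
proof -
  define L where "L = links_at E i"
  have finL: "finite L" unfolding L_def links_at_def using sg_finE[OF sg] by simp
  have ind: "\<forall>l\<in>L. (if l \<in> S k then 1 else 0) \<le> Q k l"
    using feas_pos[OF run_feas[OF run]] by (auto simp: Suc_le_eq)
  have "nodeQ E (Q (Suc k)) i = (\<Sum>l\<in>L. Q k l - (if l \<in> S k then 1 else 0))"
    unfolding nodeQ_def L_def using run_step[OF run] by simp
  also have "\<dots> = (\<Sum>l\<in>L. Q k l) - (\<Sum>l\<in>L. (if l \<in> S k then 1 else 0))"
    by (rule sum_subtractf_nat) (use ind in blast)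
  also have "(\<Sum>l\<in>L. (if l \<in> S k then 1 else 0)::nat) = (if covered (S k) i then 1 else 0)"
  proof (cases "covered (S k) i")
    case True
    then obtain l0 where l0: "l0 \<in> S k" "i \<in> l0" by (auto simp: covered_def)
    have l0L: "l0 \<in> L" using l0 feas_sub[OF run_feas[OF run]] by (auto simp: L_def links_at_def)
    have "\<forall>l\<in>L. (l \<in> S k) = (l = l0)"
      using pdisj_unique[OF feas_pdisj[OF run_feas[OF run]] _ l0(1)] l0 by (auto simp: L_def links_at_def)
    hence "(\<Sum>l\<in>L. (if l \<in> S k then 1 else 0)::nat) = (\<Sum>l\<in>L. (if l = l0 then 1 else 0))"
      by (intro sum.cong) auto
    also have "\<dots> = 1" using finL l0L by simp
    finally show ?thesis using True by simp
  next
    case False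
    hence "\<forall>l\<in>L. l \<notin> S k" by (auto simp: L_def links_at_def covered_def)
    thus ?thesis using False by simp
  qed
  finally show ?thesis unfolding nodeQ_def L_def .
qed
theorem proposition1:
  fixes V :: "'v set" and E :: "'v set set"
    and Q :: "nat \<Rightarrow> 'v set \<Rightarrow> nat" and S :: "nat \<Rightarrow> 'v set set" and k' :: nat
  assumes "simple_graph V E" and "V \<noteq> {}"
    and "nsb_run V E Q S"
    and "maxQ V E (Q (3 * k')) \<ge> 2"
  shows "maxQ V E (Q (3 * k' + 3)) \<le> maxQ V E (Q (3 * k')) - 2"
proof -
  note sg = assms(1) and Vne = assms(2) and run = assms(3)
  define p where "p = 3 * k'"
  define D where "D = maxQ V E (Q p)"
  have D2: "2 \<le> D" using assms(4) by (simp add: D_def p_def)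
  have finV: "finite V" by (rule sg_finite[OF sg])
  have step: "\<And>t i. nodeQ E (Q (Suc t)) i = nodeQ E (Q t) i - (if covered (S t) i then 1 else 0)"
    using nodeQ_step[OF sg run] by blast
  have nmono: "\<And>t i. nodeQ E (Q (Suc t)) i \<le> nodeQ E (Q t) i" using step by (simp add: diff_le_self)
  have lmono: "\<And>t l. Q (Suc t) l \<le> Q t l" using link_mono[OF run] by blast
  have n0le: "\<And>i. i \<in> V \<Longrightarrow> nodeQ E (Q p) i \<le> D" using maxQ_ge[OF sg] by (simp add: D_def)
  have m1: "Suc p mod 3 = 1" unfolding p_def by simp
  have m2: "Suc (Suc p) mod 3 = 2" unfolding p_def by presburger
  have U1: "\<And>i. Uind S (Suc p) i = (if covered (S p) i then 1 else 0)"
    unfolding Uind_def Rind_def using m1 by simp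
  have U2: "\<And>i. Uind S (Suc (Suc p)) i = (if covered (S (Suc p)) i then 1 else 0) * (if covered (S p) i then 1 else 0)"
    unfolding Uind_def Rind_def using m2 by simp
  have augm: "False" if h: "\<not> covered (S t) a" "\<not> covered (S t) b" "{a,b} \<in> E" "0 < Q t {a,b}"
    "0 < nodeQ E (Q t) a" for t a b
  proof -
    have "0 < nsb_w V E S t (Q t) a" using h(5) w_ge[of E "Q t" a V S t] by linarith
    thus False using augment[OF sg run_feas[OF run] run_opt[OF run] h(1-4)] by blast
  qed
  have I: "covered (S p) i \<or> covered (S (Suc p)) i" if iV: "i \<in> V" and iD: "nodeQ E (Q p) i = D" for i
  proof (rule ccontr)
    assume nc: "\<not> (covered (S p) i \<or> covered (S (Suc p)) i)"
    define T1 where "T1 = {v\<in>V. nodeQ E (Q p) v = D \<and> \<not> covered (S p) v}"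
    have n1le: "\<And>v. v \<in> V \<Longrightarrow> nodeQ E (Q (Suc p)) v \<le> D" using nmono n0le le_trans by blast
    have n1i: "nodeQ E (Q (Suc p)) i = D" using step[of p i] nc iD by simp
    have mx1: "maxQ V E (Q (Suc p)) = D" by (rule maxQ_eq[OF sg iV n1i n1le])
    define w where "w = nsb_w V E S (Suc p) (Q (Suc p))"
    have wi: "w i = 2 * D"
      using w_max[OF finV Vne, of E "Q (Suc p)" i S "Suc p"] mx1 n1i U1[of i] nc unfolding w_def by simp
    have Kt: "v \<in> T1" if vV: "v \<in> V" and wv: "w i \<le> w v" for v
    proof -
      have a: "w v \<le> 2 * nodeQ E (Q (Suc p)) v" unfolding w_def by (rule w_le)
      have b: "nodeQ E (Q (Suc p)) v \<le> D" using n1le vV .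
      have nv: "nodeQ E (Q (Suc p)) v = D" using a b wv wi by linarith
      have "Uind S (Suc p) v = 0"
        by (rule w_two[of E "Q (Suc p)" v V S "Suc p"]) (use a wv wi nv D2 in \<open>auto simp: w_def\<close>)
      hence nc0: "\<not> covered (S p) v" using U1[of v] by (simp split: if_splits)
      have "nodeQ E (Q p) v = D" using step[of p v] nc0 nv by simp
      thus ?thesis using vV nc0 by (simp add: T1_def)
    qed
    have "\<exists>N. feasible E (Q (Suc p)) N \<and> (\<forall>v\<in>T1. covered N v)"
    proof (rule cover_lemma[OF sg, where c="\<lambda>_. True" and D=D])
      show "T1 \<subseteq> V" by (auto simp: T1_def)
      show "\<And>v. v \<in> V \<Longrightarrow> nodeQ E (Q (Suc p)) v \<le> D" by (rule n1le)
      show "\<And>s. s \<in> T1 \<Longrightarrow> nodeQ E (Q (Suc p)) s = D" using step[of p] by (auto simp: T1_def)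
      show "0 < D" using D2 by simp
    next
      fix a b assume ab: "a \<in> T1" "b \<in> T1" "{a,b} \<in> E" "0 < Q (Suc p) {a,b}"
      have "0 < Q p {a,b}" using ab(4) lmono[of p "{a,b}"] by linarith
      moreover have "0 < nodeQ E (Q p) a" using ab(1) D2 by (simp add: T1_def)
      ultimately have False using augm[of p a b] ab by (auto simp: T1_def)
      thus "True \<noteq> True" ..
    qed
    then obtain N where N: "feasible E (Q (Suc p)) N" "\<forall>v\<in>T1. covered N v" by blast
    have iT: "i \<in> T1" using iV iD nc by (simp add: T1_def)
    have "\<not> covered (S (Suc p)) i" using nc by simp
    moreover have "0 < w i" using wi D2 by simp
    ultimately show False
      using top_lemma[OF sg run_feas[OF run] run_opt[OF run], where K=T1 and f=i and N=N] iT N Kt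
      unfolding w_def by blast
  qed
  have n2le: "nodeQ E (Q (Suc (Suc p))) v \<le> D - 1" if vV: "v \<in> V" for v
  proof -
    have s0: "nodeQ E (Q (Suc p)) v = nodeQ E (Q p) v - (if covered (S p) v then 1 else 0)" by (rule step)
    have s1: "nodeQ E (Q (Suc (Suc p))) v = nodeQ E (Q (Suc p)) v - (if covered (S (Suc p)) v then 1 else 0)" by (rule step)
    have "nodeQ E (Q p) v \<le> D" using n0le vV .
    moreover have "nodeQ E (Q p) v = D \<longrightarrow> covered (S p) v \<or> covered (S (Suc p)) v" using I vV by blast
    ultimately show ?thesis using s0 s1 by (auto split: if_splits)
  qed
  have final: "nodeQ E (Q (Suc (Suc (Suc p)))) v \<le> D - 2" if vV: "v \<in> V" for v
  proof (rule ccontr)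
    assume bad: "\<not> nodeQ E (Q (Suc (Suc (Suc p)))) v \<le> D - 2"
    have s0: "nodeQ E (Q (Suc p)) v = nodeQ E (Q p) v - (if covered (S p) v then 1 else 0)" by (rule step)
    have s1: "nodeQ E (Q (Suc (Suc p))) v = nodeQ E (Q (Suc p)) v - (if covered (S (Suc p)) v then 1 else 0)" by (rule step)
    have s2: "nodeQ E (Q (Suc (Suc (Suc p)))) v = nodeQ E (Q (Suc (Suc p))) v - (if covered (S (Suc (Suc p))) v then 1 else 0)" by (rule step)
    have le0: "nodeQ E (Q p) v \<le> D" using n0le vV .
    have Iv: "nodeQ E (Q p) v = D \<longrightarrow> covered (S p) v \<or> covered (S (Suc p)) v" using I vV by blast
    have nc2: "\<not> covered (S (Suc (Suc p))) v"
      using s0 s1 s2 le0 Iv bad D2 by (auto split: if_splits)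
    have n2v: "nodeQ E (Q (Suc (Suc p))) v = D - 1"
      using s0 s1 s2 le0 Iv bad D2 by (auto split: if_splits)
    have nboth: "\<not> (covered (S p) v \<and> covered (S (Suc p)) v)"
      using s0 s1 s2 le0 Iv bad D2 by (auto split: if_splits)
    define t2 where "t2 = Suc (Suc p)"
    have mx2: "maxQ V E (Q t2) = D - 1" unfolding t2_def by (rule maxQ_eq[OF sg vV n2v n2le])
    define w where "w = nsb_w V E S t2 (Q t2)"
    have wv: "w v = 2 * (D - 1)"
      using w_max[OF finV Vne, of E "Q t2" v S t2] mx2 n2v U2[of v] nboth unfolding w_def t2_def
      by (auto split: if_splits)
    define K where "K = {u\<in>V. nodeQ E (Q t2) u = D - 1 \<and> \<not> (covered (S p) u \<and> covered (S (Suc p)) u)}"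
    have Kt: "u \<in> K" if uV: "u \<in> V" and wu: "w v \<le> w u" for u
    proof -
      have a: "w u \<le> 2 * nodeQ E (Q t2) u" unfolding w_def by (rule w_le)
      have b: "nodeQ E (Q t2) u \<le> D - 1" using n2le uV unfolding t2_def .
      have nu: "nodeQ E (Q t2) u = D - 1" using a b wv wu by linarith
      have "Uind S t2 u = 0"
        by (rule w_two[of E "Q t2" u V S t2]) (use a wv wu nu D2 in \<open>auto simp: w_def\<close>)
      hence "\<not> (covered (S p) u \<and> covered (S (Suc p)) u)" using U2[of u] unfolding t2_def
        by (simp split: if_splits)
      thus ?thesis using uV nu by (simp add: K_def)
    qed
    have "\<exists>N. feasible E (Q t2) N \<and> (\<forall>u\<in>K. covered N u)"
    proof (rule cover_lemma[OF sg, where c="\<lambda>u. covered (S (Suc p)) u" and D="D - 1"])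
      show "K \<subseteq> V" by (auto simp: K_def)
      show "\<And>u. u \<in> V \<Longrightarrow> nodeQ E (Q t2) u \<le> D - 1" using n2le unfolding t2_def .
      show "\<And>s. s \<in> K \<Longrightarrow> nodeQ E (Q t2) s = D - 1" by (auto simp: K_def)
      show "0 < D - 1" using D2 by simp
    next
      fix a b assume ab: "a \<in> K" "b \<in> K" "{a,b} \<in> E" "0 < Q t2 {a,b}"
      have q1: "0 < Q (Suc p) {a,b}" using ab(4) lmono[of "Suc p" "{a,b}"] unfolding t2_def by linarith
      have q0: "0 < Q p {a,b}" using q1 lmono[of p "{a,b}"] by linarith
      have na2: "nodeQ E (Q t2) a = D - 1" using ab(1) by (simp add: K_def)
      have na1: "0 < nodeQ E (Q (Suc p)) a" using na2 nmono[of "Suc p" a] D2 unfolding t2_def by linarith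
      have na0: "0 < nodeQ E (Q p) a" using na1 nmono[of p a] by linarith
      show "covered (S (Suc p)) a \<noteq> covered (S (Suc p)) b"
      proof
        assume eqc: "covered (S (Suc p)) a = covered (S (Suc p)) b"
        show False
        proof (cases "covered (S (Suc p)) a")
          case True
          hence "\<not> covered (S p) a" "\<not> covered (S p) b" using ab(1,2) eqc by (auto simp: K_def)
          thus False using augm[of p a b] ab(3) q0 na0 by blast
        next
          case False
          hence "\<not> covered (S (Suc p)) b" using eqc by simp
          thus False using augm[of "Suc p" a b] False ab(3) q1 na1 by blast
        qed
      qed
    qed
    then obtain N where N: "feasible E (Q t2) N" "\<forall>u\<in>K. covered N u" by blast
    have vK: "v \<in> K" using vV n2v nboth unfolding K_def t2_def by simp
    have "\<not> covered (S t2) v" using nc2 by (simp add: t2_def)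
    moreover have "0 < w v" using wv D2 by simp
    ultimately show False
      using top_lemma[OF sg run_feas[OF run] run_opt[OF run], where K=K and f=v and N=N] vK N Kt
      unfolding w_def by blast
  qed
  have "maxQ V E (Q (Suc (Suc (Suc p)))) \<le> D - 2"
    by (rule maxQ_le[OF sg Vne]) (rule final)
  moreover have "3 * k' + 3 = Suc (Suc (Suc p))" by (simp add: p_def)
  ultimately show ?thesis unfolding D_def p_def by metis
qed
end
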